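(* Let $D$ and $m$ be positive integers, $G$ a connected graph of maximum degree at most $D$, and $S_1,\dots,S_m$ pairwise disjoint subsets of $V(G)$, each of size at least $2+(D-1)(m-1)$. Then there exist pairwise vertex-disjoint paths $P_1,\dots,P_m$ in $G$ such that for each $1\le i\le m$, $P_i$ has two distinct endpoints, both belonging to $S_i$. *)

theory Defs
  imports Main
begin

definition simple_graph :: "'a set \<Rightarrow> ('a \<Rightarrow> 'a \<Rightarrow> bool) \<Rightarrow> bool" where
  "simple_graph V E \<longleftrightarrow> finite V \<and> (\<forall>u v. E u v \<longrightarrow> E v u)
     \<and> (\<forall>v. \<not> E v v) \<and> (\<forall>u v. E u v \<longrightarrow> u \<in> V \<and> v \<in> V)"

definition degree :: "'a set \<Rightarrow> ('a \<Rightarrow> 'a \<Rightarrow> bool) \<Rightarrow> 'a \<Rightarrow> nat" where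
  "degree V E v = card {u \<in> V. E v u}"

definition max_degree_le :: "'a set \<Rightarrow> ('a \<Rightarrow> 'a \<Rightarrow> bool) \<Rightarrow> nat \<Rightarrow> bool" where
  "max_degree_le V E D \<longleftrightarrow> (\<forall>v\<in>V. degree V E v \<le> D)"

definition is_walk :: "'a set \<Rightarrow> ('a \<Rightarrow> 'a \<Rightarrow> bool) \<Rightarrow> 'a list \<Rightarrow> bool" where
  "is_walk V E p \<longleftrightarrow> p \<noteq> [] \<and> set p \<subseteq> V \<and> (\<forall>i. Suc i < length p \<longrightarrow> E (p ! i) (p ! Suc i))"

definition is_path :: "'a set \<Rightarrow> ('a \<Rightarrow> 'a \<Rightarrow> bool) \<Rightarrow> 'a list \<Rightarrow> bool" where
  "is_path V E p \<longleftrightarrow> is_walk V E p \<and> distinct p"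

definition connected_graph :: "'a set \<Rightarrow> ('a \<Rightarrow> 'a \<Rightarrow> bool) \<Rightarrow> bool" where
  "connected_graph V E \<longleftrightarrow> V \<noteq> {} \<and>
     (\<forall>u\<in>V. \<forall>v\<in>V. \<exists>p. is_walk V E p \<and> hd p = u \<and> last p = v)"

end

theory Submission imports Defs begin

lemma walk_Cons: "is_walk V E (x # w) \<longleftrightarrow> x \<in> V \<and> (w = [] \<or> (E x (hd w) \<and> is_walk V E w))"
proof (cases w)
  case Nil then show ?thesis by (auto simp: is_walk_def)
next
  case (Cons y ys)
  show ?thesis
  proof
    assume h: "is_walk V E (x # w)"
    then have "E x (hd w)" using Cons by (force simp: is_walk_def)
    moreover have "is_walk V E w" unfolding is_walk_def
    proof (intro conjI allI impI)
      show "w \<noteq> []" using Cons by simp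
      show "set w \<subseteq> V" using h by (auto simp: is_walk_def)
      fix i assume "Suc i < length w"
      then have "Suc (Suc i) < length (x#w)" by simp
      then show "E (w ! i) (w ! Suc i)" using h unfolding is_walk_def by (metis nth_Cons_Suc)
    qed
    ultimately show "x \<in> V \<and> (w = [] \<or> (E x (hd w) \<and> is_walk V E w))" using h by (auto simp: is_walk_def)
  next
    assume h: "x \<in> V \<and> (w = [] \<or> (E x (hd w) \<and> is_walk V E w))"
    show "is_walk V E (x # w)" unfolding is_walk_def
    proof (intro conjI allI impI)
      show "x # w \<noteq> []" by simp
      show "set (x # w) \<subseteq> V" using h Cons by (auto simp: is_walk_def)
      fix i assume i: "Suc i < length (x # w)"
      show "E ((x # w) ! i) ((x # w) ! Suc i)"
      proof (cases i)
        case 0 then show ?thesis using h Cons by (simp add: hd_conv_nth)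
      next
        case (Suc j) then show ?thesis using h Cons i by (auto simp: is_walk_def)
      qed
    qed
  qed
qed

lemma walk_append: "is_walk V E w1 \<Longrightarrow> is_walk V E w2 \<Longrightarrow> last w1 = hd w2 \<Longrightarrow> is_walk V E (w1 @ tl w2)"
proof (induction w1)
  case Nil then show ?case by (simp add: is_walk_def)
next
  case (Cons x w)
  show ?case
  proof (cases "w = []")
    case True
    then show ?thesis using Cons.prems by (cases w2) auto
  next
    case False
    then have "is_walk V E (w @ tl w2)" using Cons by (simp add: walk_Cons)
    then show ?thesis using Cons.prems False by (simp add: walk_Cons)
  qed
qed

lemma walk_suffix: "is_walk V E (w1 @ w2) \<Longrightarrow> w2 \<noteq> [] \<Longrightarrow> is_walk V E w2"
  by (induction w1) (auto simp: walk_Cons)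

lemma walk_rev: assumes "is_walk V E w" "\<And>u v. E u v \<Longrightarrow> E v u" shows "is_walk V E (rev w)"
  unfolding is_walk_def
proof (intro conjI allI impI)
  show "rev w \<noteq> []" "set (rev w) \<subseteq> V" using assms by (auto simp: is_walk_def)
  fix i assume i: "Suc i < length (rev w)"
  define L where "L = length w"
  have "Suc (L - Suc (Suc i)) < length w" using i L_def by simp
  then have "E (w ! (L - Suc (Suc i))) (w ! Suc (L - Suc (Suc i)))" using assms(1) by (simp add: is_walk_def)
  moreover have "Suc (L - Suc (Suc i)) = L - Suc i" using i L_def by simp
  ultimately show "E (rev w ! i) (rev w ! Suc i)" using assms(2) i L_def by (simp add: rev_nth)
qed

lemma walk_mono: "is_walk V E w \<Longrightarrow> set w \<subseteq> W \<Longrightarrow> is_walk W E w"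
  by (auto simp: is_walk_def)

lemma walk_to_path: "is_walk V E w \<Longrightarrow> \<exists>q. is_path V E q \<and> hd q = hd w \<and> last q = last w \<and> set q \<subseteq> set w"
proof (induction w)
  case Nil then show ?case by (simp add: is_walk_def)
next
  case (Cons x w)
  show ?case
  proof (cases "w = []")
    case True then show ?thesis using Cons.prems by (auto simp: is_path_def)
  next
    case False
    with Cons obtain q where q: "is_path V E q" "hd q = hd w" "last q = last w" "set q \<subseteq> set w"
      and ex: "E x (hd w)" "x \<in> V" by (auto simp: walk_Cons)
    have qne: "q \<noteq> []" using q(1) by (simp add: is_path_def is_walk_def)
    show ?thesis
    proof (cases "x \<in> set q")
      case False
      have "is_path V E (x # q)" using q ex False qne by (auto simp: is_path_def walk_Cons)
      then show ?thesis using q False qne \<open>w \<noteq> []\<close> by (intro exI[of _ "x # q"]) auto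
    next
      case True
      then obtain q1 q2 where qs: "q = q1 @ x # q2" by (meson split_list)
      have "is_path V E (x # q2)" using q(1) unfolding qs is_path_def
        using walk_suffix by auto
      moreover have "last (x # q2) = last q" using qs by simp
      ultimately show ?thesis using q \<open>w \<noteq> []\<close> qs by (intro exI[of _ "x # q2"]) auto
    qed
  qed
qed

lemma walk_map: "is_walk V E (map f [0..<Suc n]) \<longleftrightarrow> (\<forall>k\<le>n. f k \<in> V) \<and> (\<forall>k<n. E (f k) (f (Suc k)))"
  unfolding is_walk_def by (auto simp: nth_append less_Suc_eq_le simp del: upt_Suc)


lemma last_append_tl: "w2 \<noteq> [] \<Longrightarrow> last w1 = hd w2 \<Longrightarrow> w1 \<noteq> [] \<Longrightarrow> last (w1 @ tl w2) = last w2"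
  by (cases w2) auto

lemma hd_map_upt: "hd (map f [0..<Suc n]) = f 0"
  by (simp add: upt_conv_Cons del: upt_Suc)

lemma last_map_upt: "last (map f [0..<Suc n]) = f n"
  by simp

lemma two_elems: "2 \<le> card A \<Longrightarrow> \<exists>a b. a \<in> A \<and> b \<in> A \<and> a \<noteq> b"
proof -
  assume h: "2 \<le> card A"
  then have "A \<noteq> {}" by auto
  then obtain a where a: "a \<in> A" by auto
  have "finite A" using h card.infinite by fastforce
  then have "card (A - {a}) \<ge> 1" using h a by simp
  then obtain b where "b \<in> A - {a}" by (metis card.empty ex_in_conv not_one_le_zero)
  then show ?thesis using a by blast
qed

lemma main:
  fixes V :: "'a set" and E :: "'a \<Rightarrow> 'a \<Rightarrow> bool" and D :: nat and S :: "nat \<Rightarrow> 'a set" and I :: "nat set"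
  assumes "finite V" and "\<And>u w. E u w \<Longrightarrow> E w u" and "\<And>x. x \<in> V \<Longrightarrow> card {u\<in>V. E x u} \<le> D"
    and "r \<in> V" and "\<And>x. x \<in> V \<Longrightarrow> \<exists>w. is_walk V E w \<and> hd w = x \<and> last w = r"
    and "finite I" and "\<And>i. i \<in> I \<Longrightarrow> S i \<subseteq> V"
    and "\<And>i j. i \<in> I \<Longrightarrow> j \<in> I \<Longrightarrow> i \<noteq> j \<Longrightarrow> S i \<inter> S j = {}"
    and "\<And>i. i \<in> I \<Longrightarrow> card (S i) \<ge> 2 + (D - 1) * (card I - 1)"
    and "card I = n"
  shows "\<exists>P :: nat \<Rightarrow> 'a list.
           (\<forall>i\<in>I. is_path V E (P i) \<and> hd (P i) \<noteq> last (P i)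
                        \<and> hd (P i) \<in> S i \<and> last (P i) \<in> S i)
         \<and> (\<forall>i\<in>I. \<forall>j\<in>I. i \<noteq> j \<longrightarrow> set (P i) \<inter> set (P j) = {})"
  using assms
proof (induction n arbitrary: V I S r)
  case 0
  then have "I = {}" by simp
  then show ?case by simp
next
  case (Suc n')
  note fin = Suc.prems(1) and sym = Suc.prems(2) and deg = Suc.prems(3) and rV = Suc.prems(4)
    and conn = Suc.prems(5) and finI = Suc.prems(6) and SV = Suc.prems(7) and disj = Suc.prems(8)
    and cardS = Suc.prems(9) and cardI = Suc.prems(10)
  define d where "d x = (LEAST k. \<exists>w. is_walk V E w \<and> hd w = x \<and> last w = r \<and> length w = Suc k)" for x
  have par: "\<exists>y\<in>V. E x y \<and> d y < d x" if x: "x \<in> V" "x \<noteq> r" for x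
  proof -
    obtain w0 where w0: "is_walk V E w0" "hd w0 = x" "last w0 = r" using conn x by blast
    then have ex: "\<exists>k w. is_walk V E w \<and> hd w = x \<and> last w = r \<and> length w = Suc k"
      by (intro exI[of _ "length w0 - 1"] exI[of _ w0]) (auto simp: is_walk_def)
    obtain w where w: "is_walk V E w" "hd w = x" "last w = r" "length w = Suc (d x)"
      using LeastI_ex[OF ex] unfolding d_def by blast
    have "d x \<noteq> 0"
    proof
      assume "d x = 0"
      then obtain z where "w = [z]" using w(4) by (cases w) auto
      then show False using w x by simp
    qed
    then obtain k where k: "d x = Suc k" by (cases "d x") auto
    obtain y ys where wy: "w = x # y # ys" using w k by (cases w; cases "tl w") auto
    have "is_walk V E (y # ys)" "E x y" using w(1) wy by (auto simp: walk_Cons)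
    moreover have "last (y # ys) = r" using w(3) wy by simp
    moreover have "length (y # ys) = Suc k" using w(4) wy k by simp
    ultimately have "d y \<le> k" unfolding d_def by (intro Least_le) auto
    moreover have "y \<in> V" using \<open>is_walk V E (y # ys)\<close> by (auto simp: is_walk_def)
    ultimately show ?thesis using k \<open>E x y\<close> by (intro bexI[of _ y]) auto
  qed
  define p where "p x = (if x = r then r else SOME y. y \<in> V \<and> E x y \<and> d y < d x)" for x
  have p1: "p x \<in> V \<and> E x (p x) \<and> d (p x) < d x" if "x \<in> V" "x \<noteq> r" for x
  proof -
    have "\<exists>y. y \<in> V \<and> E x y \<and> d y < d x" using par[OF that] by blast
    from someI_ex[OF this] show ?thesis using that unfolding p_def by simp
  qed
  have pr: "p r = r" unfolding p_def by simp
  have pV: "p x \<in> V" if "x \<in> V" for x using p1 that pr rV by (cases "x = r") auto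
  have pVk: "(p^^k) x \<in> V" if "x \<in> V" for x k using that by (induction k) (auto intro: pV)
  have prk: "(p^^k) r = r" for k by (induction k) (auto simp: pr)
  have reach: "\<exists>k. (p^^k) x = r" if "x \<in> V" for x
    using that
  proof (induction "d x" arbitrary: x rule: less_induct)
    case less
    show ?case
    proof (cases "x = r")
      case True then show ?thesis by (intro exI[of _ 0]) simp
    next
      case False
      then have "p x \<in> V" "d (p x) < d x" using p1 less.prems by auto
      then obtain k where "(p^^k) (p x) = r" using less.hyps by blast
      then show ?thesis by (intro exI[of _ "Suc k"]) (simp add: funpow_Suc_right del: funpow.simps)
    qed
  qed
  have chain: "\<exists>n. (p^^n) x = t \<and> is_walk V E (map (\<lambda>k. (p^^k) x) [0..<Suc n])
      \<and> (\<forall>j\<le>n. (p^^(n-j)) ((p^^j) x) = t)"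
    if x: "x \<in> V" and N: "(p^^N) x = t" for x t N
  proof -
    define n where "n = (LEAST n. (p^^n) x = t)"
    have nt: "(p^^n) x = t" unfolding n_def using N by (rule LeastI)
    have notr: "(p^^k) x \<noteq> r" if "k < n" for k
    proof
      assume h: "(p^^k) x = r"
      have "(p^^n) x = (p^^(n-k)) ((p^^k) x)" using that
        by (metis funpow_add le_add_diff_inverse2 less_imp_le_nat o_apply)
      then have "t = r" using h nt prk by simp
      then show False using h that unfolding n_def using not_less_Least by blast
    qed
    have "is_walk V E (map (\<lambda>k. (p^^k) x) [0..<Suc n])"
      unfolding walk_map
    proof (intro conjI allI impI)
      fix k assume "k \<le> n" then show "(p^^k) x \<in> V" using pVk x by simp
    next
      fix k assume "k < n"
      then show "E ((p^^k) x) ((p^^Suc k) x)" using p1[OF pVk[OF x] notr] by simp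
    qed
    moreover have "(p^^(n-j)) ((p^^j) x) = t" if "j \<le> n" for j
      using that nt by (metis funpow_add le_add_diff_inverse2 o_apply)
    ultimately show ?thesis using nt by blast
  qed
  define desc where "desc v = {x \<in> V. \<exists>n. (p^^n) x = v}" for v
  have descV: "desc v \<subseteq> V" for v unfolding desc_def by auto
  have descr: "desc r = V" unfolding desc_def using reach by auto
  have chain_desc: "\<exists>w. is_walk (desc v) E w \<and> hd w = x \<and> last w = v" if "x \<in> desc v" for x v
  proof -
    from that obtain N where "x \<in> V" "(p^^N) x = v" by (auto simp: desc_def)
    from chain[OF this] obtain n where n: "(p^^n) x = v" "is_walk V E (map (\<lambda>k. (p^^k) x) [0..<Suc n])"
      "\<forall>j\<le>n. (p^^(n-j)) ((p^^j) x) = v" by blast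
    have "set (map (\<lambda>k. (p^^k) x) [0..<Suc n]) \<subseteq> desc v"
      using n(3) pVk[OF \<open>x \<in> V\<close>] unfolding desc_def by (auto simp del: upt_Suc simp: less_Suc_eq_le)
    then have "is_walk (desc v) E (map (\<lambda>k. (p^^k) x) [0..<Suc n])" by (rule walk_mono[OF n(2)])
    then show ?thesis using n(1)
      by (intro exI[of _ "map (\<lambda>k. (p^^k) x) [0..<Suc n]"]) (simp add: hd_map_upt last_map_upt del: upt_Suc)
  qed
  have "I \<noteq> {}" using cardI by auto
  then obtain i0 where i0: "i0 \<in> I" by auto
  define Q where "Q v \<longleftrightarrow> (\<exists>i\<in>I. card (S i \<inter> desc v) \<ge> 2)" for v
  have Qr: "Q r" unfolding Q_def descr using i0 cardS[OF i0] SV[OF i0]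
    by (intro bexI[of _ i0]) (auto simp: Int_absorb2)
  define QS where "QS = {w \<in> V. Q w}"
  have "finite QS" "QS \<noteq> {}" using fin Qr rV unfolding QS_def by auto
  then have "Max (d ` QS) \<in> d ` QS" by (intro Max_in) auto
  then obtain v where v: "v \<in> V" "Q v" "d v = Max (d ` QS)" unfolding QS_def by auto
  have vmax: "d w \<le> d v" if "w \<in> V" "Q w" for w
    using v(3) \<open>finite QS\<close> that unfolding QS_def by auto
  define C where "C = {c \<in> V. c \<noteq> v \<and> p c = v}"
  have finC: "finite C" using fin unfolding C_def by auto
  have Cr: "c \<noteq> r" if "c \<in> C" for c using that pr unfolding C_def by auto
  have CnQ: "\<not> Q c" if "c \<in> C" for c
  proof
    assume "Q c"
    have "d v < d c" using p1[of c] Cr[OF that] that unfolding C_def by auto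
    then show False using vmax[of c] \<open>Q c\<close> that unfolding C_def by auto
  qed
  have Cone: "card (S k \<inter> desc c) \<le> 1" if "c \<in> C" "k \<in> I" for c k
    using CnQ[OF that(1)] that(2) unfolding Q_def by force
  have decomp: "desc v \<subseteq> insert v (\<Union>c\<in>C. desc c)"
  proof
    fix x assume x: "x \<in> desc v"
    show "x \<in> insert v (\<Union>c\<in>C. desc c)"
    proof (cases "x = v")
      case False
      obtain N where xV: "x \<in> V" and N: "(p^^N) x = v" using x unfolding desc_def by auto
      define n where "n = (LEAST n. (p^^n) x = v)"
      have nt: "(p^^n) x = v" unfolding n_def using N by (rule LeastI)
      have "n \<noteq> 0" using nt False by (cases n) auto
      then obtain n1 where n1: "n = Suc n1" by (cases n) auto
      have "(p^^n1) x \<noteq> v"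
      proof
        assume "(p^^n1) x = v"
        then have "n \<le> n1" unfolding n_def by (rule Least_le)
        then show False using n1 by simp
      qed
      moreover have "p ((p^^n1) x) = v" using nt n1 by simp
      ultimately have "(p^^n1) x \<in> C" using pVk[OF xV] unfolding C_def by auto
      moreover have "x \<in> desc ((p^^n1) x)" using xV unfolding desc_def by auto
      ultimately show ?thesis by blast
    qed simp
  qed
  have count: "card (S k \<inter> desc v) \<le> card (S k \<inter> {v}) + card C" if k: "k \<in> I" for k
  proof -
    have finS: "finite (S k)" using SV[OF k] fin finite_subset by blast
    have "S k \<inter> desc v \<subseteq> (S k \<inter> {v}) \<union> (\<Union>c\<in>C. S k \<inter> desc c)" using decomp by blast
    then have "card (S k \<inter> desc v) \<le> card ((S k \<inter> {v}) \<union> (\<Union>c\<in>C. S k \<inter> desc c))"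
      by (intro card_mono) (use finS finC in auto)
    also have "\<dots> \<le> card (S k \<inter> {v}) + card (\<Union>c\<in>C. S k \<inter> desc c)" by (rule card_Un_le)
    also have "card (\<Union>c\<in>C. S k \<inter> desc c) \<le> (\<Sum>c\<in>C. card (S k \<inter> desc c))"
      by (rule card_UN_le[OF finC])
    also have "\<dots> \<le> (\<Sum>c\<in>C. 1)" by (rule sum_mono) (use Cone k in auto)
    finally show ?thesis by simp
  qed
  have CsubN: "C \<subseteq> {u\<in>V. E v u}"
  proof
    fix c assume c: "c \<in> C"
    then have "E c (p c)" using p1 Cr[OF c] unfolding C_def by auto
    then show "c \<in> {u\<in>V. E v u}" using c sym unfolding C_def by auto
  qed
  have finN: "finite {u\<in>V. E v u}" using fin by auto
  have Cdeg: "card C \<le> D" using card_mono[OF finN CsubN] deg[OF v(1)] by simp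
  have Cdeg2: "card C + 1 \<le> D" if vr: "v \<noteq> r"
  proof -
    have pv: "p v \<in> V" "E v (p v)" "d (p v) < d v" using p1 v(1) vr by auto
    have "p v \<notin> C"
    proof
      assume h: "p v \<in> C"
      then have "p v \<noteq> r" using Cr by auto
      then have "d (p (p v)) < d (p v)" using p1 pv by auto
      then show False using h pv unfolding C_def by auto
    qed
    moreover have "insert (p v) C \<subseteq> {u\<in>V. E v u}" using CsubN pv by auto
    ultimately have "card C + 1 \<le> card {u\<in>V. E v u}"
      using card_mono[OF finN] finC by (metis Suc_eq_plus1 card_insert_disjoint)
    then show ?thesis using deg[OF v(1)] by simp
  qed
  obtain i where i: "i \<in> I" "2 \<le> card (S i \<inter> desc v)"
    and others: "\<And>k. v \<noteq> r \<Longrightarrow> k \<in> I \<Longrightarrow> k \<noteq> i \<Longrightarrow> card (S k \<inter> desc v) \<le> D - 1"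
  proof (cases "\<exists>j\<in>I. v \<in> S j \<and> 2 \<le> card (S j \<inter> desc v)")
    case True
    then obtain j where j: "j\<in>I" "v \<in> S j" "2 \<le> card (S j \<inter> desc v)" by blast
    have "card (S k \<inter> desc v) \<le> D - 1" if "v \<noteq> r" "k \<in> I" "k \<noteq> j" for k
    proof -
      have "S j \<inter> S k = {}" using disj j(1) that(2,3) by blast
      then have "v \<notin> S k" using j(2) by blast
      then have "card (S k \<inter> desc v) \<le> card C" using count[OF that(2)] by simp
      then show ?thesis using Cdeg2[OF that(1)] by simp
    qed
    then show ?thesis by (intro that[of j]) (use j in auto)
  next
    case False
    note nocase = this
    obtain j where j: "j \<in> I" "2 \<le> card (S j \<inter> desc v)" using v(2) unfolding Q_def by blast
    have "card (S k \<inter> desc v) \<le> D - 1" if "v \<noteq> r" "k \<in> I" "k \<noteq> j" for k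
    proof (cases "v \<in> S k")
      case False
      then have "card (S k \<inter> desc v) \<le> card C" using count[OF that(2)] by simp
      then show ?thesis using Cdeg2[OF that(1)] by simp
    next
      case True
      have "\<not> 2 \<le> card (S k \<inter> desc v)" using nocase that(2) True by blast
      then have c1: "card (S k \<inter> desc v) \<le> 1" by simp
      have "S j \<inter> S k = {}" using disj j(1) that(2,3) by blast
      then have "v \<notin> S j" using True by blast
      obtain a where a: "a \<in> S j \<inter> desc v" using two_elems[OF j(2)] by blast
      then have "a \<noteq> v" using \<open>v \<notin> S j\<close> by auto
      then have "C \<noteq> {}" using a decomp by blast
      then have "card C \<ge> 1" using finC by (simp add: Suc_leI card_gt_0_iff)
      then show ?thesis using c1 Cdeg2[OF that(1)] by simp
    qed
    then show ?thesis by (intro that[of j]) (use j in auto)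
  qed
  obtain a b where ab: "a \<in> S i \<inter> desc v" "b \<in> S i \<inter> desc v" "a \<noteq> b"
    using two_elems[OF i(2)] by blast
  obtain wa where wa: "is_walk (desc v) E wa" "hd wa = a" "last wa = v" using chain_desc ab by blast
  obtain wb where wb: "is_walk (desc v) E wb" "hd wb = b" "last wb = v" using chain_desc ab by blast
  have wbr: "is_walk (desc v) E (rev wb)" by (rule walk_rev[OF wb(1) sym])
  have ne: "wa \<noteq> []" "rev wb \<noteq> []" using wa(1) wb(1) by (auto simp: is_walk_def)
  have wab: "is_walk (desc v) E (wa @ tl (rev wb))"
    by (rule walk_append[OF wa(1) wbr]) (simp add: hd_rev wa wb)
  have lab: "last (wa @ tl (rev wb)) = b"
    using last_append_tl[OF ne(2) _ ne(1)] wa wb by (simp add: hd_rev last_rev)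
  have hab: "hd (wa @ tl (rev wb)) = a" using ne wa by simp
  obtain q where q0: "is_path (desc v) E q" "hd q = hd (wa @ tl (rev wb))" "last q = last (wa @ tl (rev wb))"
    "set q \<subseteq> set (wa @ tl (rev wb))"
    using walk_to_path[OF wab] by blast
  have q: "hd q = a" "last q = b" using q0(2,3) hab lab by simp_all
  have qset: "set q \<subseteq> desc v" using q0(4) wab unfolding is_walk_def by blast
  have qw: "is_walk (desc v) E q" "distinct q" using q0(1) unfolding is_path_def by simp_all
  have "is_walk V E q" by (rule walk_mono[OF qw(1)]) (use qset descV in blast)
  then have qV: "is_path V E q" using qw(2) unfolding is_path_def by simp
  show ?case
  proof (cases "I = {i}")
    case True
    show ?thesis using qV ab q True by (intro exI[of _ "\<lambda>_. q"]) auto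
  next
    case False
    then obtain k0 where k0: "k0 \<in> I" "k0 \<noteq> i" using i(1) by blast
    have cI2: "card I \<ge> 2"
    proof -
      have "card {i, k0} \<le> card I" using i(1) k0 finI by (intro card_mono) auto
      then show ?thesis using k0 by simp
    qed
    have vr: "v \<noteq> r"
    proof
      assume vr: "v = r"
      have rin: "r \<in> S k" if k: "k \<in> I" for k
      proof -
        have "S k \<inter> desc v = S k" using vr descr SV[OF k] by auto
        then have b1: "card (S k) \<le> card (S k \<inter> {v}) + D" using count[OF k] Cdeg by simp
        have "(D - 1) * 1 \<le> (D - 1) * (card I - 1)" using cI2 by (intro mult_le_mono2) simp
        then have m: "D - 1 \<le> (D - 1) * (card I - 1)" by (simp only: mult_1_right)
        have c: "2 + (D - 1) * (card I - 1) \<le> card (S k)" by (rule cardS[OF k])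
        have "card (S k) \<ge> D + 1" using m c by arith
        then have "card (S k \<inter> {v}) \<noteq> 0" using b1 by linarith
        then show ?thesis using vr by (cases "r \<in> S k") auto
      qed
      show False using rin[OF i(1)] rin[OF k0(1)] disj[OF i(1) k0(1)] k0(2) by auto
    qed
    have rnd: "r \<notin> desc v" using prk vr unfolding desc_def by auto
    define V' where "V' = V - desc v"
    define I' where "I' = I - {i}"
    define S' where "S' k = S k - desc v" for k
    have cI': "card I' = n'" using cardI i(1) finI unfolding I'_def by simp
    have "\<exists>P :: nat \<Rightarrow> 'a list.
           (\<forall>i\<in>I'. is_path V' E (P i) \<and> hd (P i) \<noteq> last (P i)
                        \<and> hd (P i) \<in> S' i \<and> last (P i) \<in> S' i)
         \<and> (\<forall>i\<in>I'. \<forall>j\<in>I'. i \<noteq> j \<longrightarrow> set (P i) \<inter> set (P j) = {})"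
    proof (rule Suc.IH)
      show "finite V'" using fin unfolding V'_def by simp
      show "E u w \<Longrightarrow> E w u" for u w using sym by blast
      show "card {u \<in> V'. E x u} \<le> D" if "x \<in> V'" for x
      proof -
        have "card {u \<in> V'. E x u} \<le> card {u \<in> V. E x u}" using fin unfolding V'_def
          by (intro card_mono) auto
        then show ?thesis using deg[of x] that unfolding V'_def by simp
      qed
      show "r \<in> V'" using rV rnd unfolding V'_def by simp
      show "\<exists>w. is_walk V' E w \<and> hd w = x \<and> last w = r" if x: "x \<in> V'" for x
      proof -
        have xV: "x \<in> V" "x \<notin> desc v" using x unfolding V'_def by auto
        obtain N where "(p^^N) x = r" using reach xV by blast
        from chain[OF xV(1) this] obtain n where n: "(p^^n) x = r"
          "is_walk V E (map (\<lambda>k. (p^^k) x) [0..<Suc n])" by blast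
        have "set (map (\<lambda>k. (p^^k) x) [0..<Suc n]) \<subseteq> V'"
        proof
          fix y assume "y \<in> set (map (\<lambda>k. (p^^k) x) [0..<Suc n])"
          then obtain j where y: "y = (p^^j) x" by auto
          have "y \<notin> desc v"
          proof
            assume "y \<in> desc v"
            then obtain m where "(p^^m) y = v" unfolding desc_def by auto
            then have "(p^^(m + j)) x = v" using y by (simp add: funpow_add)
            then show False using xV unfolding desc_def by auto
          qed
          then show "y \<in> V'" using y pVk[OF xV(1)] unfolding V'_def by auto
        qed
        then have "is_walk V' E (map (\<lambda>k. (p^^k) x) [0..<Suc n])" by (rule walk_mono[OF n(2)])
        then show ?thesis using n(1)
          by (intro exI[of _ "map (\<lambda>k. (p^^k) x) [0..<Suc n]"]) (simp add: hd_map_upt last_map_upt del: upt_Suc)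
      qed
      show "finite I'" using finI unfolding I'_def by simp
      show "S' k \<subseteq> V'" if "k \<in> I'" for k using SV that unfolding S'_def V'_def I'_def by auto
      show "S' k \<inter> S' j = {}" if "k \<in> I'" "j \<in> I'" "k \<noteq> j" for k j
        using disj that unfolding S'_def I'_def by auto
      show "card I' = n'" by (rule cI')
      show "2 + (D - 1) * (card I' - 1) \<le> card (S' k)" if k: "k \<in> I'" for k
      proof -
        have kI: "k \<in> I" "k \<noteq> i" using k unfolding I'_def by auto
        have finS: "finite (S k)" using SV[OF kI(1)] fin finite_subset by blast
        have cd: "card (S' k) = card (S k) - card (S k \<inter> desc v)"
          unfolding S'_def using finS by (simp add: card_Diff_subset_Int)
        have o: "card (S k \<inter> desc v) \<le> D - 1" using others[OF vr kI] .
        have n1: "n' \<ge> 1" using cI2 cardI by simp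
        have eq: "(D - 1) * n' = (D - 1) * (n' - 1) + (D - 1)" using n1 by (cases n') auto
        have "card (S k) \<ge> 2 + (D - 1) * n'" using cardS[OF kI(1)] cardI by simp
        then show ?thesis using cd o eq cI' by arith
      qed
    qed
    then obtain P' where P': "\<forall>i\<in>I'. is_path V' E (P' i) \<and> hd (P' i) \<noteq> last (P' i)
                        \<and> hd (P' i) \<in> S' i \<and> last (P' i) \<in> S' i"
        "\<forall>i\<in>I'. \<forall>j\<in>I'. i \<noteq> j \<longrightarrow> set (P' i) \<inter> set (P' j) = {}" by blast
    have P'V: "is_path V E (P' k)" "set (P' k) \<subseteq> V'" if "k \<in> I'" for k
      using P'(1) that walk_mono unfolding V'_def is_path_def is_walk_def by (fastforce+)
    define P where "P = P'(i := q)"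
    show ?thesis
    proof (rule exI[of _ P], rule conjI; intro ballI impI)
      fix k assume k: "k \<in> I"
      show "is_path V E (P k) \<and> hd (P k) \<noteq> last (P k) \<and> hd (P k) \<in> S k \<and> last (P k) \<in> S k"
      proof (cases "k = i")
        case True then show ?thesis using qV q ab unfolding P_def by auto
      next
        case False
        then have "k \<in> I'" using k unfolding I'_def by auto
        then show ?thesis using P'(1) P'V False unfolding P_def S'_def by auto
      qed
    next
      fix k j assume kj: "k \<in> I" "j \<in> I" "k \<noteq> j"
      show "set (P k) \<inter> set (P j) = {}"
      proof (cases "k = i \<or> j = i")
        case True
        then show ?thesis using kj qset P'V[of k] P'V[of j] unfolding P_def I'_def V'_def by auto
      next
        case False
        then show ?thesis using kj P'(2) unfolding P_def I'_def by auto
      qed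
    qed
  qed
qed


theorem lemma6p4:
  fixes V :: "'a set" and E :: "'a \<Rightarrow> 'a \<Rightarrow> bool"
    and D m :: nat and S :: "nat \<Rightarrow> 'a set"
  assumes "D \<ge> 1" and "m \<ge> 1"
    and "simple_graph V E" and "connected_graph V E" and "max_degree_le V E D"
    and "\<And>i. i \<in> {1..m} \<Longrightarrow> S i \<subseteq> V"
    and "\<And>i j. i \<in> {1..m} \<Longrightarrow> j \<in> {1..m} \<Longrightarrow> i \<noteq> j \<Longrightarrow> S i \<inter> S j = {}"
    and "\<And>i. i \<in> {1..m} \<Longrightarrow> card (S i) \<ge> 2 + (D - 1) * (m - 1)"
  shows "\<exists>P :: nat \<Rightarrow> 'a list.
           (\<forall>i\<in>{1..m}. is_path V E (P i) \<and> hd (P i) \<noteq> last (P i)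
                        \<and> hd (P i) \<in> S i \<and> last (P i) \<in> S i)
         \<and> (\<forall>i\<in>{1..m}. \<forall>j\<in>{1..m}. i \<noteq> j \<longrightarrow> set (P i) \<inter> set (P j) = {})"
proof -
  have fin: "finite V" and sym: "\<And>u w. E u w \<Longrightarrow> E w u"
    using assms(3) unfolding simple_graph_def by auto
  have deg: "\<And>x. x \<in> V \<Longrightarrow> card {u\<in>V. E x u} \<le> D"
    using assms(5) unfolding max_degree_le_def degree_def by auto
  obtain r where r: "r \<in> V" using assms(4) unfolding connected_graph_def by auto
  have conn: "\<And>x. x \<in> V \<Longrightarrow> \<exists>w. is_walk V E w \<and> hd w = x \<and> last w = r"
    using assms(4) r unfolding connected_graph_def by blast
  show ?thesis
    by (rule main[OF fin sym deg r conn, of "{1..m}" S "card {1..m}"])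
       (use assms(6,7,8) in auto)
qed

end
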